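(* Assume there are constants $\gamma_t\ge 0$ ($t=0,\dots,T-1$) with $|C_t(x)-C_t(y)|\le\gamma_t|x-y|$ for all $x,y$. Then for every $t=0,1,\dots,T-1$ and all $x'\le x$: $H_t(x')-H_t(x)\le\bar\psi_t(x-x',x)$ and $V_t(x')-V_t(x)\le\bar\varphi_t(x-x',x)$.
   Context: Model. Fix an integer horizon $T\ge 2$, a discount factor $\alpha\in(0,1]$, and for $t=0,\dots,T-1$: unit ordering costs $c_t\in\mathbb R$, a salvage coefficient $c_T\in\mathbb R$, setup costs $K_t\ge 0$, functions $G_t:\mathbb R\to\mathbb R$, and independent nonnegative random demands $D_0,\dots,D_{T-1}$ with right-continuous distribution functions $F_t$ and finite means; all expectations appearing are assumed finite. Put $C_t(y)=(c_t-\alpha c_{t+1})y+G_t(y)+\alpha c_{t+1}E[D_t]$. Standing assumptions: (i) each $C_t$ is convex with $C_t(y)\to+\infty$ as $|y|\to\infty$; (ii) $K_t\ge \alpha K_{t+1}$ for $t=0,\dots,T-2$. Grid construction. Fix $\theta>0$, $z_m=m\theta$, $Z_\theta=\{z_m:m\in\mathbb Z\}$, $f_t(n)=F_t(z_{n+1})-F_t(z_n)$ ($n\ge -1$). $C^m_t=\min\{y: C_t(y)=\min_x C_t(x)\}$; with $z_{n_0}<C^m_t\le z_{n_0+1}$, $S^U_t=\min\{z_m\in Z_\theta: z_m\ge C^m_t,\ C_t(z_m)>C_t(z_{n_0})+K_t\}$. $s_{T-1}$ is a point with $s_{T-1}\le C^m_{T-1}$, $C_{T-1}(s_{T-1})=C_{T-1}(C^m_{T-1})+K_{T-1}$;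 $\bar I_{T-1}=s_{T-1}$. For $t=T-2,\dots,0$: $I_t=\max\{z_m\in Z_\theta: z_m<\min(\bar I_{t+1}-\theta,C^m_t)\}$, $\bar I_t=\max\{z_m\in Z_\theta: z_m\le I_t,\ C_t(z_m)>C_t(I_t)+K_t\}+\theta$. $H_{T-1}=C_{T-1}$, $S_{T-1}=C^m_{T-1}$; $V_t(y)=H_t(S_t)+K_t$ for $y<s_t$, $V_t(y)=H_t(y)$ for $y\ge s_t$. For $t=T-2,\dots,0$: $H_t(y)=C_t(y)+\alpha\sum_{n=-1}^\infty V_{t+1}(y-z_n)f_t(n)$; $S_t=\max\{z_m\in Z_\theta: I_t\le z_m\le S^U_t,\ H_t(z_m)=\min\{H_t(z_n):z_n\in Z_\theta, I_t\le z_n\le S^U_t\}\}$; $s_t=S_t$ if $K_t=0$, else $s_t=\min\{z_m\in Z_\theta:\bar I_t\le z_m\le S_t,\ H_t(z_m)\le H_t(S_t)+K_t\}$. Upper estimate functions. $\bar\psi_{T-1}(x,y)=\gamma_{T-1}x$ for all $x,y$; $\bar\varphi_{T-1}(x,y)=0$ if $y<s_{T-1}$ and $\bar\varphi_{T-1}(x,y)=\gamma_{T-1}x$ if $y\ge s_{T-1}$. For $t=0,\dots,T-2$: $\bar\psi_t(x,y)=\gamma_tx$ if $y<s_{t+1}-\theta$, and otherwise $\bar\psi_t(x,y)=\gamma_tx+\alpha\sum_{m=-1}^{n-1}\bar\varphi_{t+1}(x,y-z_m)f_t(m)$, where $n$ is the integer with $z_{n-1}\le y-s_{t+1}<z_n$;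 and $\bar\varphi_t(x,y)=0$ if $y<s_t$, $\bar\varphi_t(x,y)=\bar\psi_t(y-s_t+\theta,y)$ if $y\ge s_t$ and $y-x<s_t$, $\bar\varphi_t(x,y)=\bar\psi_t(x,y)$ if $y\ge s_t$ and $y-x\ge s_t$. *)

theory Defs
  imports "HOL-Probability.Probability"
begin

text \<open>C_t(y) = (c_t - alpha c_{t+1}) y + G_t(y) + alpha c_{t+1} E[D_t];
  the demand D_t is represented by its distribution, a probability measure on the reals.\<close>
definition Cfun :: "real \<Rightarrow> (nat \<Rightarrow> real) \<Rightarrow> (nat \<Rightarrow> real \<Rightarrow> real) \<Rightarrow> (nat \<Rightarrow> real measure)
    \<Rightarrow> nat \<Rightarrow> real \<Rightarrow> real" where
  "Cfun \<alpha> c G D t y = (c t - \<alpha> * c (Suc t)) * y + G t y + \<alpha> * c (Suc t) * (\<integral>x. x \<partial>D t)"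

definition Fdist :: "(nat \<Rightarrow> real measure) \<Rightarrow> nat \<Rightarrow> real \<Rightarrow> real" where
  "Fdist D t x = measure (D t) {..x}"

definition zg :: "real \<Rightarrow> int \<Rightarrow> real" where
  "zg \<theta> m = real_of_int m * \<theta>"

definition fgrid :: "(nat \<Rightarrow> real \<Rightarrow> real) \<Rightarrow> real \<Rightarrow> nat \<Rightarrow> int \<Rightarrow> real" where
  "fgrid F \<theta> t n = F t (zg \<theta> (n + 1)) - F t (zg \<theta> n)"

definition Cmin :: "(real \<Rightarrow> real) \<Rightarrow> real" where
  "Cmin Ct = (LEAST y. \<forall>x. Ct y \<le> Ct x)"

definition SUg :: "real \<Rightarrow> (real \<Rightarrow> real) \<Rightarrow> real \<Rightarrow> real" where
  "SUg \<theta> Ct Kt = (let n0 = \<lceil>Cmin Ct / \<theta>\<rceil> - 1 in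
     zg \<theta> (LEAST m. zg \<theta> m \<ge> Cmin Ct \<and> Ct (zg \<theta> m) > Ct (zg \<theta> n0) + Kt))"

definition slast :: "(real \<Rightarrow> real) \<Rightarrow> real \<Rightarrow> real" where
  "slast Ct Kt = (THE s. s \<le> Cmin Ct \<and> Ct s = Ct (Cmin Ct) + Kt)"

definition Ig :: "real \<Rightarrow> (real \<Rightarrow> real) \<Rightarrow> real \<Rightarrow> real" where
  "Ig \<theta> Ct Ibn = zg \<theta> (GREATEST m. zg \<theta> m < min (Ibn - \<theta>) (Cmin Ct))"

definition Ibarg :: "real \<Rightarrow> (real \<Rightarrow> real) \<Rightarrow> real \<Rightarrow> real \<Rightarrow> real" where
  "Ibarg \<theta> Ct Kt I = zg \<theta> (GREATEST m. zg \<theta> m \<le> I \<and> Ct (zg \<theta> m) > Ct I + Kt) + \<theta>"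

definition Vof :: "(real \<Rightarrow> real) \<Rightarrow> real \<Rightarrow> real \<Rightarrow> real \<Rightarrow> real \<Rightarrow> real" where
  "Vof H S s Kt y = (if y < s then H S + Kt else H y)"

text \<open>H_t(y) = C_t(y) + alpha * sum_{n=-1}^infty V_{t+1}(y - z_n) f_t(n)  (index n = k - 1).\<close>
definition Hnext :: "real \<Rightarrow> real \<Rightarrow> (real \<Rightarrow> real) \<Rightarrow> (nat \<Rightarrow> real \<Rightarrow> real) \<Rightarrow> nat
    \<Rightarrow> (real \<Rightarrow> real) \<Rightarrow> real \<Rightarrow> real" where
  "Hnext \<alpha> \<theta> Ct F t Vn y =
     Ct y + \<alpha> * (\<Sum>k. Vn (y - zg \<theta> (int k - 1)) * fgrid F \<theta> t (int k - 1))"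

definition Sg :: "real \<Rightarrow> (real \<Rightarrow> real) \<Rightarrow> real \<Rightarrow> real \<Rightarrow> real" where
  "Sg \<theta> H I SU = (let M = {m. I \<le> zg \<theta> m \<and> zg \<theta> m \<le> SU};
                       mv = Min ((\<lambda>m. H (zg \<theta> m)) ` M)
                   in zg \<theta> (Max {m \<in> M. H (zg \<theta> m) = mv}))"

definition sg :: "real \<Rightarrow> (real \<Rightarrow> real) \<Rightarrow> real \<Rightarrow> real \<Rightarrow> real \<Rightarrow> real" where
  "sg \<theta> H Kt Ib S = (if Kt = 0 then S
     else zg \<theta> (Min {m. Ib \<le> zg \<theta> m \<and> zg \<theta> m \<le> S \<and> H (zg \<theta> m) \<le> H S + Kt}))"

text \<open>stage j computes (H_t, S_t, s_t, Ibar_t) for t = T-1-j.\<close>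
primrec stage :: "nat \<Rightarrow> real \<Rightarrow> real \<Rightarrow> (nat \<Rightarrow> real \<Rightarrow> real) \<Rightarrow> (nat \<Rightarrow> real)
    \<Rightarrow> (nat \<Rightarrow> real \<Rightarrow> real) \<Rightarrow> nat \<Rightarrow> (real \<Rightarrow> real) \<times> real \<times> real \<times> real" where
  "stage T \<alpha> \<theta> C K F 0 =
     (C (T - 1), Cmin (C (T - 1)), slast (C (T - 1)) (K (T - 1)), slast (C (T - 1)) (K (T - 1)))"
| "stage T \<alpha> \<theta> C K F (Suc j) =
     (let t = T - 2 - j;
          (Hn, Sn, sn, Ibn) = stage T \<alpha> \<theta> C K F j;
          Vn = Vof Hn Sn sn (K (Suc t));
          H = Hnext \<alpha> \<theta> (C t) F t Vn;
          I = Ig \<theta> (C t) Ibn;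
          Ib = Ibarg \<theta> (C t) (K t) I;
          S = Sg \<theta> H I (SUg \<theta> (C t) (K t));
          s = sg \<theta> H (K t) Ib S
      in (H, S, s, Ib))"

definition Hs where "Hs T \<alpha> \<theta> C K F t = fst (stage T \<alpha> \<theta> C K F (T - 1 - t))"
definition Ss where "Ss T \<alpha> \<theta> C K F t = fst (snd (stage T \<alpha> \<theta> C K F (T - 1 - t)))"
definition ss where "ss T \<alpha> \<theta> C K F t = fst (snd (snd (stage T \<alpha> \<theta> C K F (T - 1 - t))))"
definition Vs where
  "Vs T \<alpha> \<theta> C K F t y = Vof (Hs T \<alpha> \<theta> C K F t) (Ss T \<alpha> \<theta> C K F t) (ss T \<alpha> \<theta> C K F t) (K t) y"

text \<open>psiphi j gives (psibar_t, phibar_t) for t = T-1-j; s is the sequence s_t.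
  In psibar_t the sum runs over m = -1 .. n-1 with n-1 = floor((y - s_{t+1})/theta).\<close>
primrec psiphi :: "nat \<Rightarrow> real \<Rightarrow> real \<Rightarrow> (nat \<Rightarrow> real \<Rightarrow> real) \<Rightarrow> (nat \<Rightarrow> real) \<Rightarrow> (nat \<Rightarrow> real)
    \<Rightarrow> nat \<Rightarrow> (real \<Rightarrow> real \<Rightarrow> real) \<times> (real \<Rightarrow> real \<Rightarrow> real)" where
  "psiphi T \<alpha> \<theta> F \<gamma> s 0 =
     ((\<lambda>x y. \<gamma> (T - 1) * x), (\<lambda>x y. if y < s (T - 1) then 0 else \<gamma> (T - 1) * x))"
| "psiphi T \<alpha> \<theta> F \<gamma> s (Suc j) =
     (let t = T - 2 - j;
          \<phi>n = snd (psiphi T \<alpha> \<theta> F \<gamma> s j);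
          \<psi> = (\<lambda>x y. if y < s (Suc t) - \<theta> then \<gamma> t * x
                 else \<gamma> t * x + \<alpha> * (\<Sum>m \<in> {-1 .. \<lfloor>(y - s (Suc t)) / \<theta>\<rfloor>}.
                        \<phi>n x (y - zg \<theta> m) * fgrid F \<theta> t m));
          \<phi> = (\<lambda>x y. if y < s t then 0
                 else if y - x < s t then \<psi> (y - s t + \<theta>) y else \<psi> x y)
      in (\<psi>, \<phi>))"

definition psibar where "psibar T \<alpha> \<theta> F \<gamma> s t = fst (psiphi T \<alpha> \<theta> F \<gamma> s (T - 1 - t))"
definition phibar where "phibar T \<alpha> \<theta> F \<gamma> s t = snd (psiphi T \<alpha> \<theta> F \<gamma> s (T - 1 - t))"

end

theory Submission imports Defs begin

lemma int_least:
  assumes "P (m0::int)" "\<forall>m. P m \<longrightarrow> b \<le> m"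
  shows "P (LEAST m. P m) \<and> (\<forall>m. P m \<longrightarrow> (LEAST m. P m) \<le> m)"
proof -
  let ?A = "{m. P m \<and> m \<le> m0}"
  have fin: "finite ?A" by (rule finite_subset[of _ "{b..m0}"]) (use assms in auto)
  have ne: "?A \<noteq> {}" using assms by auto
  define x where "x = Min ?A"
  have xA: "x \<in> ?A" unfolding x_def using Min_in[OF fin ne] .
  have low: "\<forall>m. P m \<longrightarrow> x \<le> m"
  proof (intro allI impI)
    fix m assume "P m"
    show "x \<le> m"
    proof (cases "m \<le> m0")
      case True then show ?thesis unfolding x_def using Min_le[OF fin] \<open>P m\<close> by auto
    next
      case False then show ?thesis using xA by auto
    qed
  qed
  have "(LEAST m. P m) = x" by (rule Least_equality) (use xA low in auto)
  then show ?thesis using xA low by auto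
qed

lemma int_greatest:
  assumes "P (m0::int)" "\<forall>m. P m \<longrightarrow> m \<le> b"
  shows "P (GREATEST m. P m) \<and> (\<forall>m. P m \<longrightarrow> m \<le> (GREATEST m. P m))"
proof -
  let ?A = "{m. P m \<and> m0 \<le> m}"
  have fin: "finite ?A"
  proof (rule finite_subset[of _ "{m0..b}"])
    show "?A \<subseteq> {m0..b}" using assms(2) by auto
  qed simp
  have ne: "?A \<noteq> {}" using assms by auto
  define x where "x = Max ?A"
  have xA: "x \<in> ?A" unfolding x_def using Max_in[OF fin ne] .
  have up: "\<forall>m. P m \<longrightarrow> m \<le> x"
  proof (intro allI impI)
    fix m assume "P m"
    show "m \<le> x"
    proof (cases "m0 \<le> m")
      case True then show ?thesis unfolding x_def using Max_ge[OF fin] \<open>P m\<close> by auto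
    next
      case False then show ?thesis using xA by auto
    qed
  qed
  have "(GREATEST m. P m) = x"
  proof (rule Greatest_equality)
    show "P x" using xA by simp
  next
    fix y assume "P y" then show "y \<le> x" using up by blast
  qed
  then show ?thesis using xA up by auto
qed

lemma zg_le: "0 < \<theta> \<Longrightarrow> zg \<theta> m \<le> zg \<theta> n \<longleftrightarrow> m \<le> n"
  by (simp add: zg_def)
lemma zg_less: "0 < \<theta> \<Longrightarrow> zg \<theta> m < zg \<theta> n \<longleftrightarrow> m < n"
  by (simp add: zg_def)
lemma zg_minus: "zg \<theta> m - \<theta> = zg \<theta> (m - 1)"
  by (simp add: zg_def algebra_simps)
lemma zg_plus: "zg \<theta> m + \<theta> = zg \<theta> (m + 1)"
  by (simp add: zg_def algebra_simps)
lemma zg_floor: "0 < \<theta> \<Longrightarrow> zg \<theta> \<lfloor>v / \<theta>\<rfloor> \<le> v"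
proof -
  assume t: "0 < \<theta>"
  have "real_of_int \<lfloor>v / \<theta>\<rfloor> \<le> v / \<theta>" by simp
  from mult_right_mono[OF this less_imp_le[OF t]] show ?thesis unfolding zg_def using t by simp
qed
lemma zg_ceil: "0 < \<theta> \<Longrightarrow> v \<le> zg \<theta> \<lceil>v / \<theta>\<rceil>"
proof -
  assume t: "0 < \<theta>"
  have "v / \<theta> \<le> real_of_int \<lceil>v / \<theta>\<rceil>" by simp
  from mult_right_mono[OF this less_imp_le[OF t]] show ?thesis unfolding zg_def using t by simp
qed

locale cvx =
  fixes C :: "real \<Rightarrow> real"
  assumes cv: "convex_on UNIV C" and co: "filterlim C at_top at_infinity"
begin

lemma coer: "\<exists>R. \<forall>y. R \<le> \<bar>y\<bar> \<longrightarrow> M \<le> C y"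
proof -
  have "eventually (\<lambda>x. M \<le> C x) at_infinity" using co by (simp add: filterlim_at_top)
  then show ?thesis by (auto simp: eventually_at_infinity)
qed

lemma cont: "continuous_on UNIV C"
  using convex_on_continuous[OF open_UNIV cv] .

lemma min_ex: "\<exists>x0. \<forall>x. C x0 \<le> C x"
proof -
  obtain R where R: "\<forall>y. R \<le> \<bar>y\<bar> \<longrightarrow> C 0 + 1 \<le> C y" using coer by blast
  define R' where "R' = max R 1"
  have cc: "continuous_on {-R'..R'} C" using continuous_on_subset[OF cont] by blast
  have ne: "{-R'..R'} \<noteq> {}" unfolding R'_def by simp
  from continuous_attains_inf[OF compact_Icc ne cc]
  obtain x0 where x0: "x0 \<in> {-R'..R'}" "\<forall>y\<in>{-R'..R'}. C x0 \<le> C y" by blast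
  have "0 \<in> {-R'..R'}" unfolding R'_def by simp
  then have c0: "C x0 \<le> C 0" using x0(2) by blast
  show ?thesis
  proof (intro exI allI)
    fix x show "C x0 \<le> C x"
    proof (cases "x \<in> {-R'..R'}")
      case True then show ?thesis using x0(2) by blast
    next
      case False then have "R' < \<bar>x\<bar>" by auto
      then have "R \<le> \<bar>x\<bar>" unfolding R'_def by linarith
      then have "C 0 + 1 \<le> C x" using R by blast
      then show ?thesis using c0 by linarith
    qed
  qed
qed

lemma cmin_props: "(\<forall>x. C (Cmin C) \<le> C x) \<and> (\<forall>y. (\<forall>x. C y \<le> C x) \<longrightarrow> Cmin C \<le> y)"
proof -
  obtain x0 where x0: "\<forall>x. C x0 \<le> C x" using min_ex by blast
  let ?M = "{y. \<forall>x. C y \<le> C x}"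
  have Meq: "?M = {y. C y \<le> C x0}" using x0 by (auto intro: order_trans)
  have cl: "closed ?M" unfolding Meq
    by (rule closed_Collect_le) (use cont in auto)
  obtain R where R: "\<forall>y. R \<le> \<bar>y\<bar> \<longrightarrow> C x0 + 1 \<le> C y" using coer by blast
  have bdd: "bdd_below ?M"
  proof (rule bdd_belowI[of _ "-\<bar>R\<bar>"])
    fix y assume "y \<in> ?M"
    then have "C y \<le> C x0" by auto
    show "-\<bar>R\<bar> \<le> y"
    proof (rule ccontr)
      assume "\<not> - \<bar>R\<bar> \<le> y"
      then have "R \<le> \<bar>y\<bar>" by auto
      then show False using R \<open>C y \<le> C x0\<close> by force
    qed
  qed
  have ne: "?M \<noteq> {}" using x0 by auto
  have inM: "Inf ?M \<in> ?M" by (rule closed_contains_Inf[OF ne bdd cl])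
  have "Cmin C = Inf ?M" unfolding Cmin_def
    by (rule Least_equality) (use inM cInf_lower[OF _ bdd] in auto)
  then show ?thesis using inM cInf_lower[OF _ bdd] by auto
qed

lemma cmin_min: "C (Cmin C) \<le> C x" using cmin_props by auto

lemma below_cmin: "y < Cmin C \<Longrightarrow> C (Cmin C) < C y"
  using cmin_props by (metis leD le_less_linear order.trans)

lemma cvx_mid:
  assumes "a < b" "b < c"
  shows "C b \<le> C a + (b - a) / (c - a) * (C c - C a)"
proof -
  define u where "u = (b - a) / (c - a)"
  have u: "0 \<le> u" "u \<le> 1" using assms unfolding u_def by (auto simp: field_simps)
  have uc: "u * (c - a) = b - a" using assms unfolding u_def by simp
  have "b = (1 - u) *\<^sub>R a + u *\<^sub>R c" using uc by (simp add: algebra_simps)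
  then have "C b \<le> (1 - u) * C a + u * C c" using convex_onD[OF cv u] by simp
  then show ?thesis unfolding u_def[symmetric] by (simp add: algebra_simps)
qed

lemma mono_left: assumes "a \<le> b" "b \<le> Cmin C" shows "C b \<le> C a"
proof (cases "a < b \<and> b < Cmin C")
  case True
  have "C b \<le> C a + (b - a) / (Cmin C - a) * (C (Cmin C) - C a)" using cvx_mid True by auto
  moreover have "(b - a) / (Cmin C - a) * (C (Cmin C) - C a) \<le> 0"
    using True cmin_min[of a] by (intro mult_nonneg_nonpos) auto
  ultimately show ?thesis by linarith
next
  case False
  then have "a = b \<or> b = Cmin C" using assms by auto
  then show ?thesis using cmin_min by auto
qed

lemma slast_props:
  assumes K: "K \<ge> 0"
  shows "slast C K \<le> Cmin C \<and> C (slast C K) = C (Cmin C) + K"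
proof -
  let ?m = "Cmin C"
  obtain R where R: "\<forall>y. R \<le> \<bar>y\<bar> \<longrightarrow> C ?m + K \<le> C y" using coer by blast
  define a where "a = - \<bar>R\<bar> - \<bar>?m\<bar>"
  have a1: "a \<le> ?m" unfolding a_def by linarith
  have "R \<le> \<bar>a\<bar>" unfolding a_def by linarith
  then have a2: "C ?m + K \<le> C a" using R by blast
  have cc: "continuous_on {a..?m} C" using continuous_on_subset[OF cont] by blast
  have "C ?m \<le> C ?m + K" using K by simp
  from IVT2'[of C ?m "C ?m + K" a, OF this a2 a1 cc]
  obtain s where s: "a \<le> s" "s \<le> ?m" "C s = C ?m + K" by blast
  have uniq: "s2 = s1" if h1: "s1 \<le> ?m" "C s1 = C ?m + K" and h2: "s2 \<le> ?m" "C s2 = C ?m + K" for s1 s2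
  proof (rule ccontr)
    have gen: False if "x1 < x2" "x1 \<le> ?m" "C x1 = C ?m + K" "x2 \<le> ?m" "C x2 = C ?m + K" for x1 x2
    proof (cases "K = 0")
      case True
      then have "\<forall>x. C x1 \<le> C x" using that cmin_min by auto
      then have "?m \<le> x1" using cmin_props by auto
      then show False using that by auto
    next
      case False
      then have Kp: "K > 0" using K by auto
      then have "x2 < ?m" using that by (cases "x2 = ?m") auto
      have "C x2 \<le> C x1 + (x2 - x1) / (?m - x1) * (C ?m - C x1)" using cvx_mid[OF \<open>x1<x2\<close> \<open>x2 < ?m\<close>] .
      moreover have "(x2 - x1) / (?m - x1) * (C ?m - C x1) < 0"
        using that Kp \<open>x2 < ?m\<close> by (intro mult_pos_neg) auto
      ultimately show False using that by linarith
    qed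
    assume "s2 \<noteq> s1"
    then consider "s1 < s2" | "s2 < s1" by linarith
    then show False
    proof cases
      case 1 show False by (rule gen[OF 1 h1 h2])
    next
      case 2 show False by (rule gen[OF 2 h2 h1])
    qed
  qed
  have "slast C K = s" unfolding slast_def
  proof (rule the_equality)
    show "s \<le> ?m \<and> C s = C ?m + K" using s by simp
  next
    fix x assume "x \<le> ?m \<and> C x = C ?m + K"
    then show "x = s" using uniq[of s x] s by simp
  qed
  then show ?thesis using s by auto
qed

lemma coer_left: "\<exists>y0. \<forall>y \<le> y0. M \<le> C y"
proof -
  obtain R where R: "\<forall>y. R \<le> \<bar>y\<bar> \<longrightarrow> M \<le> C y" using coer by blast
  have "\<forall>y \<le> -\<bar>R\<bar>. M \<le> C y"
  proof (intro allI impI)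
    fix y :: real assume "y \<le> -\<bar>R\<bar>"
    then have "R \<le> \<bar>y\<bar>" by (simp add: abs_if split: if_splits)
    then show "M \<le> C y" using R by blast
  qed
  then show ?thesis by blast
qed

lemma coer_right: "\<exists>y0. \<forall>y \<ge> y0. M \<le> C y"
proof -
  obtain R where R: "\<forall>y. R \<le> \<bar>y\<bar> \<longrightarrow> M \<le> C y" using coer by blast
  have "\<forall>y \<ge> \<bar>R\<bar>. M \<le> C y"
  proof (intro allI impI)
    fix y :: real assume "\<bar>R\<bar> \<le> y"
    then have "R \<le> \<bar>y\<bar>" by (simp add: abs_if split: if_splits)
    then show "M \<le> C y" using R by blast
  qed
  then show ?thesis by blast
qed


lemma stage_step:
  assumes th: "0 < \<theta>" and Kt: "0 \<le> Kt"
    and Hf: "\<forall>y. y < Ibn - \<theta> \<longrightarrow> H y = C y + c0"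
  shows "Ig \<theta> C Ibn < Ibn - \<theta> \<and>
    Ibarg \<theta> C Kt (Ig \<theta> C Ibn) \<le> sg \<theta> H Kt (Ibarg \<theta> C Kt (Ig \<theta> C Ibn)) (Sg \<theta> H (Ig \<theta> C Ibn) (SUg \<theta> C Kt)) \<and>
    H (Sg \<theta> H (Ig \<theta> C Ibn) (SUg \<theta> C Kt)) + Kt \<le>
      H (sg \<theta> H Kt (Ibarg \<theta> C Kt (Ig \<theta> C Ibn)) (Sg \<theta> H (Ig \<theta> C Ibn) (SUg \<theta> C Kt)) - \<theta>)"
proof -
  define v where "v = min (Ibn - \<theta>) (Cmin C)"
  define I where "I = Ig \<theta> C Ibn"
  define Ib where "Ib = Ibarg \<theta> C Kt I"
  define SU where "SU = SUg \<theta> C Kt"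
  define S where "S = Sg \<theta> H I SU"
  define s where "s = sg \<theta> H Kt Ib S"
  have p1: "zg \<theta> (\<lfloor>v/\<theta>\<rfloor> - 1) < v"
    using zg_floor[OF th, of v] zg_minus[of \<theta> "\<lfloor>v/\<theta>\<rfloor>"] th by linarith
  have p2: "\<forall>m. zg \<theta> m < v \<longrightarrow> m \<le> \<lceil>v/\<theta>\<rceil>"
  proof (intro allI impI)
    fix m assume "zg \<theta> m < v"
    then have "zg \<theta> m < zg \<theta> \<lceil>v/\<theta>\<rceil>" using zg_ceil[OF th, of v] by linarith
    then show "m \<le> \<lceil>v/\<theta>\<rceil>" using zg_less[OF th] by auto
  qed
  define mI where "mI = (GREATEST m. zg \<theta> m < v)"
  have mI: "zg \<theta> mI < v" "\<forall>m. zg \<theta> m < v \<longrightarrow> m \<le> mI"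
    using int_greatest[of "\<lambda>m. zg \<theta> m < v", OF p1 p2] unfolding mI_def by auto
  have I_eq: "I = zg \<theta> mI" unfolding I_def Ig_def mI_def v_def ..
  have Iv: "I < Ibn - \<theta>" "I < Cmin C" using mI(1) unfolding I_eq v_def by auto
  have Hf': "\<And>y. y \<le> I \<Longrightarrow> H y = C y + c0" using Hf Iv by force
  obtain y0 where y0: "\<forall>y\<le>y0. C I + Kt + 1 \<le> C y" using coer_left by blast
  define w where "w = min y0 I"
  have wf: "zg \<theta> \<lfloor>w/\<theta>\<rfloor> \<le> w" using zg_floor[OF th] .
  have q1: "zg \<theta> \<lfloor>w/\<theta>\<rfloor> \<le> I \<and> C (zg \<theta> \<lfloor>w/\<theta>\<rfloor>) > C I + Kt"
  proof
    show "zg \<theta> \<lfloor>w/\<theta>\<rfloor> \<le> I" using wf unfolding w_def by linarith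
    have "zg \<theta> \<lfloor>w/\<theta>\<rfloor> \<le> y0" using wf unfolding w_def by linarith
    then have "C I + Kt + 1 \<le> C (zg \<theta> \<lfloor>w/\<theta>\<rfloor>)" using y0 by blast
    then show "C (zg \<theta> \<lfloor>w/\<theta>\<rfloor>) > C I + Kt" by linarith
  qed
  have q2: "\<forall>m. (zg \<theta> m \<le> I \<and> C (zg \<theta> m) > C I + Kt) \<longrightarrow> m \<le> mI"
    using zg_le[OF th] unfolding I_eq by blast
  define mb where "mb = (GREATEST m. zg \<theta> m \<le> I \<and> C (zg \<theta> m) > C I + Kt)"
  have mb: "zg \<theta> mb \<le> I" "C (zg \<theta> mb) > C I + Kt"
    "\<forall>m. (zg \<theta> m \<le> I \<and> C (zg \<theta> m) > C I + Kt) \<longrightarrow> m \<le> mb"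
    using int_greatest[of "\<lambda>m. zg \<theta> m \<le> I \<and> C (zg \<theta> m) > C I + Kt", OF q1 q2]
    unfolding mb_def by auto
  have Ib_eq: "Ib = zg \<theta> (mb + 1)" by (simp add: Ib_def Ibarg_def mb_def zg_plus)
  have "zg \<theta> mb \<noteq> I" using mb(2) Kt by auto
  then have "zg \<theta> mb < zg \<theta> mI" using mb(1) unfolding I_eq by auto
  then have mbI: "mb < mI" using zg_less[OF th] by auto
  have IbI: "Ib \<le> I" unfolding Ib_eq I_eq using mbI zg_le[OF th] by auto
  define n0 where "n0 = \<lceil>Cmin C / \<theta>\<rceil> - 1"
  obtain y1 where y1: "\<forall>y\<ge>y1. C (zg \<theta> n0) + Kt + 1 \<le> C y" using coer_right by blast
  define u where "u = max y1 (Cmin C)"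
  have uc: "u \<le> zg \<theta> \<lceil>u/\<theta>\<rceil>" using zg_ceil[OF th] .
  have r1: "zg \<theta> \<lceil>u/\<theta>\<rceil> \<ge> Cmin C \<and> C (zg \<theta> \<lceil>u/\<theta>\<rceil>) > C (zg \<theta> n0) + Kt"
  proof
    show "zg \<theta> \<lceil>u/\<theta>\<rceil> \<ge> Cmin C" using uc unfolding u_def by linarith
    have "zg \<theta> \<lceil>u/\<theta>\<rceil> \<ge> y1" using uc unfolding u_def by linarith
    then have "C (zg \<theta> n0) + Kt + 1 \<le> C (zg \<theta> \<lceil>u/\<theta>\<rceil>)" using y1 by blast
    then show "C (zg \<theta> \<lceil>u/\<theta>\<rceil>) > C (zg \<theta> n0) + Kt" by linarith
  qed
  have r2: "\<forall>m. (zg \<theta> m \<ge> Cmin C \<and> C (zg \<theta> m) > C (zg \<theta> n0) + Kt) \<longrightarrow> \<lfloor>Cmin C/\<theta>\<rfloor> \<le> m"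
  proof (intro allI impI)
    fix m assume "zg \<theta> m \<ge> Cmin C \<and> C (zg \<theta> m) > C (zg \<theta> n0) + Kt"
    then have "zg \<theta> \<lfloor>Cmin C/\<theta>\<rfloor> \<le> zg \<theta> m" using zg_floor[OF th, of "Cmin C"] by linarith
    then show "\<lfloor>Cmin C/\<theta>\<rfloor> \<le> m" using zg_le[OF th] by blast
  qed
  define mU where "mU = (LEAST m. zg \<theta> m \<ge> Cmin C \<and> C (zg \<theta> m) > C (zg \<theta> n0) + Kt)"
  have mU: "zg \<theta> mU \<ge> Cmin C"
    using int_least[of "\<lambda>m. zg \<theta> m \<ge> Cmin C \<and> C (zg \<theta> m) > C (zg \<theta> n0) + Kt", OF r1 r2]
    unfolding mU_def by auto
  have SU_eq: "SU = zg \<theta> mU" unfolding SU_def SUg_def Let_def mU_def n0_def ..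
  have ISU: "I \<le> SU" using Iv mU unfolding SU_eq by linarith
  define M where "M = {m. I \<le> zg \<theta> m \<and> zg \<theta> m \<le> SU}"
  have finM: "finite M"
  proof (rule finite_subset[of _ "{mI..mU}"])
    show "M \<subseteq> {mI..mU}" unfolding M_def I_eq SU_eq using zg_le[OF th] by auto
  qed simp
  have mIM: "mI \<in> M" unfolding M_def using ISU I_eq by auto
  define mv where "mv = Min ((\<lambda>m. H (zg \<theta> m)) ` M)"
  have mv_in: "mv \<in> (\<lambda>m. H (zg \<theta> m)) ` M" unfolding mv_def
    using Min_in[of "(\<lambda>m. H (zg \<theta> m)) ` M"] finM mIM by blast
  have mv_le: "\<forall>m\<in>M. mv \<le> H (zg \<theta> m)" unfolding mv_def using Min_le finM by blast
  define MS where "MS = {m \<in> M. H (zg \<theta> m) = mv}"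
  have finMS: "finite MS" unfolding MS_def using finM by simp
  have neMS: "MS \<noteq> {}" unfolding MS_def using mv_in by auto
  define mS where "mS = Max MS"
  have mS: "mS \<in> MS" unfolding mS_def using Max_in[OF finMS neMS] .
  have S_eq: "S = zg \<theta> mS" by (simp add: S_def Sg_def Let_def M_def mv_def MS_def mS_def)
  have HS: "H S = mv" using mS unfolding MS_def S_eq by auto
  have mSM: "mS \<in> M" using mS unfolding MS_def by auto
  have IS: "I \<le> S" using mSM unfolding M_def S_eq by auto
  have SSU: "S \<le> SU" using mSM unfolding M_def S_eq by auto
  have mImS: "mI \<le> mS" using IS zg_le[OF th] unfolding I_eq S_eq by blast
  have HSI: "H S \<le> H I" using mv_le mIM HS unfolding I_eq by auto
  have HI: "H I = C I + c0" using Hf' by simp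
  have main: "Ib \<le> s \<and> H S + Kt \<le> H (s - \<theta>)"
  proof (cases "Kt = 0")
    case True
    then have s_eq: "s = S" unfolding s_def sg_def by simp
    have "H S \<le> H (S - \<theta>)"
    proof (cases "mI \<le> mS - 1")
      case True
      then have "mS - 1 \<in> M" using mSM zg_le[OF th, of "mS - 1" mS] zg_le[OF th, of mI "mS - 1"]
        unfolding M_def I_eq by auto
      then show ?thesis using mv_le HS zg_minus[of \<theta> mS] unfolding S_eq by auto
    next
      case False
      then have "mS = mI" using mImS by auto
      then have SI: "S = I" unfolding S_eq I_eq by simp
      have "C I \<le> C (I - \<theta>)" using mono_left[of "I - \<theta>" I] Iv th by auto
      moreover have "H (I - \<theta>) = C (I - \<theta>) + c0" using Hf' th by simp
      ultimately show ?thesis using HI SI by simp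
    qed
    then show ?thesis using s_eq True IbI IS by simp
  next
    case False
    define Q where "Q = {m. Ib \<le> zg \<theta> m \<and> zg \<theta> m \<le> S \<and> H (zg \<theta> m) \<le> H S + Kt}"
    have s_eq: "s = zg \<theta> (Min Q)" unfolding s_def sg_def Q_def using False by simp
    have finQ: "finite Q"
    proof (rule finite_subset[of _ "{mb+1..mS}"])
      show "Q \<subseteq> {mb+1..mS}" unfolding Q_def Ib_eq S_eq using zg_le[OF th] by auto
    qed simp
    have mSQ: "mS \<in> Q" unfolding Q_def using IbI IS Kt unfolding S_eq by auto
    define ms where "ms = Min Q"
    have msQ: "ms \<in> Q" unfolding ms_def using Min_in[OF finQ] mSQ by blast
    have msmin: "\<And>m. m \<in> Q \<Longrightarrow> ms \<le> m" unfolding ms_def using Min_le[OF finQ] by blast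
    have s_eq2: "s = zg \<theta> ms" unfolding s_eq ms_def ..
    have Ibs: "Ib \<le> s" using msQ unfolding s_eq2 Q_def by auto
    have smt: "s - \<theta> = zg \<theta> (ms - 1)" unfolding s_eq2 by (rule zg_minus)
    have mbms: "mb + 1 \<le> ms" using msQ zg_le[OF th] unfolding Q_def Ib_eq by blast
    have "H S + Kt \<le> H (s - \<theta>)"
    proof (cases "mb + 1 \<le> ms - 1")
      case True
      have a1: "Ib \<le> zg \<theta> (ms - 1)" unfolding Ib_eq using True zg_le[OF th] by blast
      have a2: "zg \<theta> (ms - 1) \<le> S" using msQ zg_le[OF th, of "ms - 1" ms] unfolding Q_def by auto
      have "\<not> H (zg \<theta> (ms - 1)) \<le> H S + Kt"
      proof
        assume "H (zg \<theta> (ms - 1)) \<le> H S + Kt"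
        then have "ms - 1 \<in> Q" unfolding Q_def using a1 a2 by auto
        then show False using msmin by fastforce
      qed
      then show ?thesis unfolding smt by linarith
    next
      case False
      then have "ms = mb + 1" using mbms by auto
      then have "s - \<theta> = zg \<theta> mb" unfolding smt by simp
      moreover have "H (zg \<theta> mb) = C (zg \<theta> mb) + c0" using Hf' mb(1) by blast
      ultimately show ?thesis using mb(2) HI HSI by simp
    qed
    then show ?thesis using Ibs by simp
  qed
  show ?thesis using Iv main unfolding s_def S_def SU_def Ib_def I_def by simp
qed
end

lemma fgrid_props:
  assumes th: "0 < \<theta>" and mono: "\<forall>a b. a \<le> b \<longrightarrow> F t a \<le> F t b"
    and bnd: "\<forall>a. 0 \<le> F t a \<and> F t a \<le> 1"
  shows "\<forall>n. 0 \<le> fgrid F \<theta> t n" "summable (\<lambda>k. fgrid F \<theta> t (int k - 1))"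
proof -
  show nn: "\<forall>n. 0 \<le> fgrid F \<theta> t n"
  proof
    fix n
    have "zg \<theta> n \<le> zg \<theta> (n + 1)" using zg_le[OF th] by simp
    then show "0 \<le> fgrid F \<theta> t n" unfolding fgrid_def using mono by simp
  qed
  have ps: "(\<Sum>k<n. fgrid F \<theta> t (int k - 1)) = F t (zg \<theta> (int n - 1)) - F t (zg \<theta> (-1))" for n
    by (induction n) (simp_all add: fgrid_def)
  show "summable (\<lambda>k. fgrid F \<theta> t (int k - 1))"
  proof (rule summableI_nonneg_bounded)
    fix n show "0 \<le> fgrid F \<theta> t (int n - 1)" using nn by blast
    show "(\<Sum>k<n. fgrid F \<theta> t (int k - 1)) \<le> 1" unfolding ps using bnd
      by (smt (verit))
  qed
qed

lemma eventually_below: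
  assumes th: "0 < \<theta>"
  shows "\<exists>N. \<forall>k\<ge>N. y - zg \<theta> (int k - 1) < sn"
proof (intro exI allI impI)
  fix k :: nat assume k: "nat (\<lceil>(y - sn)/\<theta>\<rceil> + 2) \<le> k"
  then have "\<lceil>(y - sn)/\<theta>\<rceil> + 1 \<le> int k - 1" by linarith
  then have "zg \<theta> (\<lceil>(y - sn)/\<theta>\<rceil> + 1) \<le> zg \<theta> (int k - 1)" using zg_le[OF th] by blast
  moreover have "zg \<theta> (\<lceil>(y - sn)/\<theta>\<rceil> + 1) = zg \<theta> \<lceil>(y - sn)/\<theta>\<rceil> + \<theta>" using zg_plus by metis
  moreover have "y - sn \<le> zg \<theta> \<lceil>(y - sn)/\<theta>\<rceil>" using zg_ceil[OF th] .
  ultimately show "y - zg \<theta> (int k - 1) < sn" using th by linarith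
qed

lemma H_step:
  fixes Ct Vn :: "real \<Rightarrow> real" and \<phi> :: "real \<Rightarrow> real \<Rightarrow> real"
  assumes th: "0 < \<theta>" and al: "0 \<le> \<alpha>"
    and fnn: "\<forall>n. 0 \<le> fgrid F \<theta> t n" and fsum: "summable (\<lambda>k. fgrid F \<theta> t (int k - 1))"
    and Vc: "\<forall>y. y < sn \<longrightarrow> Vn y = A"
    and IH: "\<forall>x x'. x' \<le> x \<longrightarrow> Vn x' - Vn x \<le> \<phi> (x - x') x"
    and \<phi>0: "\<forall>u y. y < sn \<longrightarrow> \<phi> u y = 0"
    and Lc: "Ct x' - Ct x \<le> g * (x - x')"
    and xx: "x' \<le> x"
  shows "Hnext \<alpha> \<theta> Ct F t Vn x' - Hnext \<alpha> \<theta> Ct F t Vn x \<le>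
     g * (x - x') + \<alpha> * (\<Sum>m \<in> {-1 .. \<lfloor>(x - sn) / \<theta>\<rfloor>}. \<phi> (x - x') (x - zg \<theta> m) * fgrid F \<theta> t m)"
proof -
  let ?f = "\<lambda>k. fgrid F \<theta> t (int k - 1)"
  have summ: "summable (\<lambda>k. Vn (y - zg \<theta> (int k - 1)) * ?f k)" for y
  proof -
    obtain N where N: "\<forall>k\<ge>N. y - zg \<theta> (int k - 1) < sn" using eventually_below[OF th] by blast
    have ev: "eventually (\<lambda>k. Vn (y - zg \<theta> (int k - 1)) * ?f k = A * ?f k) sequentially"
      unfolding eventually_sequentially using N Vc by auto
    have "summable (\<lambda>k. Vn (y - zg \<theta> (int k - 1)) * ?f k) = summable (\<lambda>k. A * ?f k)"
      by (rule summable_cong[OF ev])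
    moreover have "summable (\<lambda>k. A * ?f k)" using summable_mult[OF fsum] .
    ultimately show ?thesis by simp
  qed
  define fl where "fl = \<lfloor>(x - sn) / \<theta>\<rfloor>"
  define g' where "g' = (\<lambda>k. \<phi> (x - x') (x - zg \<theta> (int k - 1)) * ?f k)"
  define a where "a = (\<lambda>k. Vn (x' - zg \<theta> (int k - 1)) * ?f k)"
  define b where "b = (\<lambda>k. Vn (x - zg \<theta> (int k - 1)) * ?f k)"
  have g0: "g' k = 0" if "k \<notin> {..<nat (fl + 2)}" for k
  proof -
    have "fl + 1 \<le> int k - 1" using that by auto
    then have "zg \<theta> (fl + 1) \<le> zg \<theta> (int k - 1)" using zg_le[OF th] by blast
    moreover have "zg \<theta> (fl + 1) = zg \<theta> fl + \<theta>" using zg_plus by metis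
    moreover have "(x - sn)/\<theta> < real_of_int fl + 1" unfolding fl_def by linarith
    then have "x - sn < (real_of_int fl + 1) * \<theta>" using th by (simp add: pos_divide_less_eq)
    then have "x - sn < zg \<theta> fl + \<theta>" unfolding zg_def by (simp add: algebra_simps)
    ultimately have "x - zg \<theta> (int k - 1) < sn" by linarith
    then show ?thesis unfolding g'_def using \<phi>0 by simp
  qed
  have gsum: "summable g'" by (rule summable_finite[of "{..<nat (fl + 2)}"]) (use g0 in auto)
  have gval: "suminf g' = (\<Sum>k<nat (fl + 2). g' k)" by (rule suminf_finite) (use g0 in auto)
  have reidx: "(\<Sum>k<nat (fl + 2). g' k) =
      (\<Sum>m \<in> {-1 .. fl}. \<phi> (x - x') (x - zg \<theta> m) * fgrid F \<theta> t m)"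
    unfolding g'_def
    by (rule sum.reindex_bij_witness[of _ "\<lambda>m. nat (m + 1)" "\<lambda>k. int k - 1"]) auto
  have le: "a k - b k \<le> g' k" for k
  proof -
    have "Vn (x' - zg \<theta> (int k - 1)) - Vn (x - zg \<theta> (int k - 1)) \<le> \<phi> (x - x') (x - zg \<theta> (int k - 1))"
      using IH[rule_format, of "x' - zg \<theta> (int k - 1)" "x - zg \<theta> (int k - 1)"] xx by simp
    from mult_right_mono[OF this, of "?f k"] fnn show ?thesis
      unfolding a_def b_def g'_def by (simp add: algebra_simps)
  qed
  have "suminf a - suminf b = (\<Sum>k. a k - b k)"
    by (rule suminf_diff) (use summ in \<open>simp_all add: a_def b_def\<close>)
  also have "\<dots> \<le> suminf g'"
    by (rule suminf_le[OF le]) (use summ gsum in \<open>simp_all add: a_def b_def summable_diff\<close>)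
  finally have "suminf a - suminf b \<le> suminf g'" .
  then have "\<alpha> * (suminf a - suminf b) \<le> \<alpha> * suminf g'" using al by (rule mult_left_mono)
  moreover have "Hnext \<alpha> \<theta> Ct F t Vn x' - Hnext \<alpha> \<theta> Ct F t Vn x = Ct x' - Ct x + \<alpha> * (suminf a - suminf b)"
    unfolding Hnext_def a_def b_def by (simp add: algebra_simps)
  moreover have "\<alpha> * suminf g' = \<alpha> * (\<Sum>m \<in> {-1 .. \<lfloor>(x - sn) / \<theta>\<rfloor>}. \<phi> (x - x') (x - zg \<theta> m) * fgrid F \<theta> t m)"
    using gval reidx unfolding fl_def by simp
  ultimately show ?thesis using Lc by linarith
qed

lemma psiphi_phi0:
  assumes "y < s (T - 1 - j)"
  shows "snd (psiphi T \<alpha> \<theta> F \<gamma> s j) u y = 0"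
proof (cases j)
  case 0 then show ?thesis using assms by simp
next
  case (Suc j')
  have "T - 1 - Suc j' = T - 2 - j'" by simp
  then show ?thesis using assms Suc by (simp add: Let_def)
qed

lemma psiphi_psi:
  assumes th: "0 < \<theta>"
  shows "fst (psiphi T \<alpha> \<theta> F \<gamma> s (Suc j)) u y =
    \<gamma> (T - 2 - j) * u + \<alpha> * (\<Sum>m \<in> {-1 .. \<lfloor>(y - s (Suc (T - 2 - j))) / \<theta>\<rfloor>}.
        snd (psiphi T \<alpha> \<theta> F \<gamma> s j) u (y - zg \<theta> m) * fgrid F \<theta> (T - 2 - j) m)"
proof (cases "y < s (Suc (T - 2 - j)) - \<theta>")
  case True
  then have "(y - s (Suc (T - 2 - j))) / \<theta> < -1" using th by (simp add: pos_divide_less_eq)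
  then have "\<lfloor>(y - s (Suc (T - 2 - j))) / \<theta>\<rfloor> < -1" by linarith
  then have "{-1 .. \<lfloor>(y - s (Suc (T - 2 - j))) / \<theta>\<rfloor>} = {}" by auto
  then show ?thesis using True by (simp add: Let_def)
next
  case False
  then show ?thesis by (simp add: Let_def)
qed


theorem lemma4p5:
  fixes T :: nat and \<alpha> \<theta> :: real and c K \<gamma> :: "nat \<Rightarrow> real"
    and G :: "nat \<Rightarrow> real \<Rightarrow> real" and D :: "nat \<Rightarrow> real measure"
  assumes T2: "T \<ge> 2"
    and alpha: "0 < \<alpha>" "\<alpha> \<le> 1"
    and theta: "\<theta> > 0"
    and demand: "\<forall>t<T. prob_space (D t) \<and> sets (D t) = sets borel \<and>
                    (AE x in D t. 0 \<le> x) \<and> integrable (D t) (\<lambda>x. x)"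
    and Kpos: "\<forall>t<T. K t \<ge> 0"
    and Kdec: "\<forall>t. t + 2 \<le> T \<longrightarrow> \<alpha> * K (Suc t) \<le> K t"
    and Cconv: "\<forall>t<T. convex_on UNIV (Cfun \<alpha> c G D t) \<and>
                      filterlim (Cfun \<alpha> c G D t) at_top at_infinity"
    and Lip: "\<forall>t<T. \<gamma> t \<ge> 0 \<and>
               (\<forall>x y. \<bar>Cfun \<alpha> c G D t x - Cfun \<alpha> c G D t y\<bar> \<le> \<gamma> t * \<bar>x - y\<bar>)"
  shows "\<forall>t<T. \<forall>x x'. x' \<le> x \<longrightarrow>
     Hs T \<alpha> \<theta> (Cfun \<alpha> c G D) K (Fdist D) t x' - Hs T \<alpha> \<theta> (Cfun \<alpha> c G D) K (Fdist D) t x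
       \<le> psibar T \<alpha> \<theta> (Fdist D) \<gamma> (ss T \<alpha> \<theta> (Cfun \<alpha> c G D) K (Fdist D)) t (x - x') x \<and>
     Vs T \<alpha> \<theta> (Cfun \<alpha> c G D) K (Fdist D) t x' - Vs T \<alpha> \<theta> (Cfun \<alpha> c G D) K (Fdist D) t x
       \<le> phibar T \<alpha> \<theta> (Fdist D) \<gamma> (ss T \<alpha> \<theta> (Cfun \<alpha> c G D) K (Fdist D)) t (x - x') x"
proof -
  define C where "C = Cfun \<alpha> c G D"
  define F where "F = Fdist D"
  define st where "st j = stage T \<alpha> \<theta> C K F j" for j
  define sq where "sq = ss T \<alpha> \<theta> C K F"
  define ps where "ps j = psiphi T \<alpha> \<theta> F \<gamma> sq j" for j
  have cvxt: "cvx (C t)" if "t < T" for t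
    using Cconv that unfolding C_def by (simp add: cvx_def)
  have Lipt: "C t x' - C t x \<le> \<gamma> t * (x - x')" if "t < T" "x' \<le> x" for t x x'
  proof -
    have "\<bar>C t x' - C t x\<bar> \<le> \<gamma> t * \<bar>x' - x\<bar>" using Lip that unfolding C_def by blast
    then show ?thesis using that by (simp add: abs_if split: if_splits)
  qed
  have fg: "(\<forall>n. 0 \<le> fgrid F \<theta> t n) \<and> summable (\<lambda>k. fgrid F \<theta> t (int k - 1))" if "t < T" for t
  proof -
    have ps: "prob_space (D t)" and se: "sets (D t) = sets borel" using demand that by auto
    have fm: "finite_measure (D t)" using ps by (simp add: prob_space_def)
    have mono: "\<forall>a b. a \<le> b \<longrightarrow> F t a \<le> F t b"
    proof (intro allI impI)
      fix a b :: real assume "a \<le> b"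
      have "{..b} \<in> sets (D t)" using se by simp
      then show "F t a \<le> F t b" unfolding F_def Fdist_def
        using finite_measure.finite_measure_mono[OF fm, of "{..a}" "{..b}"] \<open>a \<le> b\<close> by auto
    qed
    have bnd: "\<forall>a. 0 \<le> F t a \<and> F t a \<le> 1"
      unfolding F_def Fdist_def using prob_space.prob_le_1[OF ps] by auto
    show ?thesis using fgrid_props[of \<theta> F t, OF theta mono bnd] by blast
  qed
  have sq_eq: "sq (T - 1 - j) = fst (snd (snd (st j)))" if "j \<le> T - 1" for j
  proof -
    have "T - 1 - (T - 1 - j) = j" using that by simp
    then show ?thesis unfolding sq_def ss_def st_def by simp
  qed
  have P: "snd (snd (snd (st j))) \<le> fst (snd (snd (st j))) \<and>
     (\<forall>x x'. x' \<le> x \<longrightarrow> fst (st j) x' - fst (st j) x \<le> fst (ps j) (x - x') x \<and>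
        Vof (fst (st j)) (fst (snd (st j))) (fst (snd (snd (st j)))) (K (T - 1 - j)) x' -
        Vof (fst (st j)) (fst (snd (st j))) (fst (snd (snd (st j)))) (K (T - 1 - j)) x
          \<le> snd (ps j) (x - x') x)" if "j \<le> T - 1" for j
    using that
  proof (induction j)
    case 0
    have TT: "T - 1 < T" using T2 by simp
    interpret cv: cvx "C (T - 1)" using cvxt[OF TT] .
    define sl where "sl = slast (C (T - 1)) (K (T - 1))"
    have st0: "st 0 = (C (T - 1), Cmin (C (T - 1)), sl, sl)" by (simp add: st_def sl_def)
    have sq0: "sq (T - 1) = sl" using sq_eq[of 0] st0 by simp
    have slp: "C (T - 1) sl = C (T - 1) (Cmin (C (T - 1))) + K (T - 1)"
      using cv.slast_props[of "K (T - 1)"] Kpos TT unfolding sl_def by auto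
    have ps0: "fst (ps 0) u y = \<gamma> (T - 1) * u" "snd (ps 0) u y = (if y < sl then 0 else \<gamma> (T - 1) * u)" for u y
      using sq0 by (simp_all add: ps_def)
    show ?case
    proof (intro conjI allI impI)
      show "snd (snd (snd (st 0))) \<le> fst (snd (snd (st 0)))" using st0 by simp
    next
      fix x x' :: real assume xx: "x' \<le> x"
      show "fst (st 0) x' - fst (st 0) x \<le> fst (ps 0) (x - x') x"
        using Lipt[OF TT xx] st0 ps0 by simp
      show "Vof (fst (st 0)) (fst (snd (st 0))) (fst (snd (snd (st 0)))) (K (T - 1 - 0)) x' -
        Vof (fst (st 0)) (fst (snd (st 0))) (fst (snd (snd (st 0)))) (K (T - 1 - 0)) x
          \<le> snd (ps 0) (x - x') x"
      proof (cases "x < sl")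
        case True then show ?thesis using xx st0 ps0 by (simp add: Vof_def)
      next
        case False
        show ?thesis
        proof (cases "x' < sl")
          case True
          have "C (T - 1) sl - C (T - 1) x \<le> \<gamma> (T - 1) * (x - sl)" using Lipt[OF TT] False by simp
          moreover have "\<gamma> (T - 1) * (x - sl) \<le> \<gamma> (T - 1) * (x - x')"
            using True Lip TT by (intro mult_left_mono) auto
          ultimately show ?thesis using True False st0 ps0 slp by (simp add: Vof_def)
        next
          case False2: False
          then show ?thesis using False st0 ps0 Lipt[OF TT xx] by (simp add: Vof_def)
        qed
      qed
    qed
  next
    case (Suc j)
    have jT: "j \<le> T - 1" using Suc.prems by simp
    note IH = Suc.IH[OF jT]
    define t where "t = T - 2 - j"
    have tT: "t < T" unfolding t_def using T2 by simp
    have St: "Suc t = T - 1 - j" unfolding t_def using Suc.prems by simp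
    have tS: "T - 1 - Suc j = t" unfolding t_def by simp
    obtain Hn Sn sn Ibn where stj: "st j = (Hn, Sn, sn, Ibn)" by (cases "st j") auto
    define Vn where "Vn = Vof Hn Sn sn (K (Suc t))"
    define H where "H = Hnext \<alpha> \<theta> (C t) F t Vn"
    define I where "I = Ig \<theta> (C t) Ibn"
    define Ib where "Ib = Ibarg \<theta> (C t) (K t) I"
    define S where "S = Sg \<theta> H I (SUg \<theta> (C t) (K t))"
    define s where "s = sg \<theta> H (K t) Ib S"
    have stj': "stage T \<alpha> \<theta> C K F j = (Hn, Sn, sn, Ibn)" using stj by (simp add: st_def)
    have stS: "st (Suc j) = (H, S, s, Ib)"
      by (simp add: st_def stj' Let_def H_def Vn_def I_def Ib_def S_def s_def t_def)
    have sqS: "sq (Suc t) = sn" using sq_eq[OF jT] stj St by simp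
    have sqt: "sq t = s" using sq_eq[OF Suc.prems] stS tS by simp
    have IH1: "Ibn \<le> sn" using IH stj by simp
    have IHV: "\<forall>x x'. x' \<le> x \<longrightarrow> Vn x' - Vn x \<le> snd (ps j) (x - x') x"
      using IH stj St unfolding Vn_def by simp
    have Vc: "\<forall>y. y < sn \<longrightarrow> Vn y = Hn Sn + K (Suc t)" unfolding Vn_def Vof_def by simp
    define c0 where "c0 = \<alpha> * (\<Sum>k. (Hn Sn + K (Suc t)) * fgrid F \<theta> t (int k - 1))"
    have Hf: "\<forall>y. y < Ibn - \<theta> \<longrightarrow> H y = C t y + c0"
    proof (intro allI impI)
      fix y assume y: "y < Ibn - \<theta>"
      have "\<forall>k. Vn (y - zg \<theta> (int k - 1)) = Hn Sn + K (Suc t)"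
      proof
        fix k :: nat
        have "zg \<theta> (-1) \<le> zg \<theta> (int k - 1)" using zg_le[OF theta] by simp
        then have "y - zg \<theta> (int k - 1) < sn" using y IH1 by (simp add: zg_def)
        then show "Vn (y - zg \<theta> (int k - 1)) = Hn Sn + K (Suc t)" using Vc by blast
      qed
      then show "H y = C t y + c0" unfolding H_def Hnext_def c0_def by simp
    qed
    interpret cv: cvx "C t" using cvxt[OF tT] .
    have step: "Ig \<theta> (C t) Ibn < Ibn - \<theta> \<and> Ib \<le> s \<and> H S + K t \<le> H (s - \<theta>)"
      using cv.stage_step[OF theta _ Hf] Kpos tT
      unfolding s_def S_def Ib_def I_def by auto
    have phi0: "\<forall>u y. y < sn \<longrightarrow> snd (ps j) u y = 0"
      using psiphi_phi0[of _ sq T j] sq_eq[OF jT] stj unfolding ps_def by simp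
    have psi: "fst (ps (Suc j)) u y = \<gamma> t * u + \<alpha> * (\<Sum>m \<in> {-1 .. \<lfloor>(y - sn) / \<theta>\<rfloor>}.
        snd (ps j) u (y - zg \<theta> m) * fgrid F \<theta> t m)" for u y
      using psiphi_psi[OF theta, of T \<alpha> F \<gamma> sq j u y] sqS unfolding ps_def t_def[symmetric] by simp
    have phi: "snd (ps (Suc j)) u y = (if y < s then 0 else if y - u < s then fst (ps (Suc j)) (y - s + \<theta>) y
        else fst (ps (Suc j)) u y)" for u y
      using sqt unfolding ps_def t_def by (simp add: Let_def)
    have Hpart: "H x' - H x \<le> fst (ps (Suc j)) (x - x') x" if xx: "x' \<le> x" for x x'
      unfolding psi H_def
      by (rule H_step[OF theta _ _ _ Vc IHV phi0 Lipt[OF tT xx] xx]) (use alpha fg[OF tT] in auto)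
    show ?case
    proof (intro conjI allI impI)
      show "snd (snd (snd (st (Suc j)))) \<le> fst (snd (snd (st (Suc j))))" using stS step by simp
    next
      fix x x' :: real assume xx: "x' \<le> x"
      show "fst (st (Suc j)) x' - fst (st (Suc j)) x \<le> fst (ps (Suc j)) (x - x') x"
        using Hpart[OF xx] stS by simp
      have V: "Vof H S s (K t) x' - Vof H S s (K t) x \<le> snd (ps (Suc j)) (x - x') x"
      proof (cases "x < s")
        case True then show ?thesis using xx phi by (simp add: Vof_def)
      next
        case False
        show ?thesis
        proof (cases "x' < s")
          case True
          have "H (s - \<theta>) - H x \<le> fst (ps (Suc j)) (x - (s - \<theta>)) x" using Hpart[of "s - \<theta>" x] False theta by simp
          then show ?thesis using True False step phi by (simp add: Vof_def algebra_simps)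
        next
          case False2: False
          then show ?thesis using False phi Hpart[OF xx] by (simp add: Vof_def)
        qed
      qed
      then show "Vof (fst (st (Suc j))) (fst (snd (st (Suc j)))) (fst (snd (snd (st (Suc j))))) (K (T - 1 - Suc j)) x' -
        Vof (fst (st (Suc j))) (fst (snd (st (Suc j)))) (fst (snd (snd (st (Suc j))))) (K (T - 1 - Suc j)) x
          \<le> snd (ps (Suc j)) (x - x') x" using stS tS by simp
    qed
  qed
  show ?thesis
  proof (intro allI impI)
    fix t x x' assume tT: "t < T" and xx: "x' \<le> (x::real)"
    have j: "T - 1 - t \<le> T - 1" by simp
    have e: "T - 1 - (T - 1 - t) = t" using tT by simp
    from P[OF j] xx have "fst (st (T - 1 - t)) x' - fst (st (T - 1 - t)) x \<le> fst (ps (T - 1 - t)) (x - x') x \<and>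
        Vof (fst (st (T - 1 - t))) (fst (snd (st (T - 1 - t)))) (fst (snd (snd (st (T - 1 - t))))) (K t) x' -
        Vof (fst (st (T - 1 - t))) (fst (snd (st (T - 1 - t)))) (fst (snd (snd (st (T - 1 - t))))) (K t) x
          \<le> snd (ps (T - 1 - t)) (x - x') x" unfolding e by blast
    then show "Hs T \<alpha> \<theta> (Cfun \<alpha> c G D) K (Fdist D) t x' - Hs T \<alpha> \<theta> (Cfun \<alpha> c G D) K (Fdist D) t x
       \<le> psibar T \<alpha> \<theta> (Fdist D) \<gamma> (ss T \<alpha> \<theta> (Cfun \<alpha> c G D) K (Fdist D)) t (x - x') x \<and>
     Vs T \<alpha> \<theta> (Cfun \<alpha> c G D) K (Fdist D) t x' - Vs T \<alpha> \<theta> (Cfun \<alpha> c G D) K (Fdist D) t x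
       \<le> phibar T \<alpha> \<theta> (Fdist D) \<gamma> (ss T \<alpha> \<theta> (Cfun \<alpha> c G D) K (Fdist D)) t (x - x') x"
      unfolding Hs_def Vs_def Ss_def psibar_def phibar_def ss_def[of T \<alpha> \<theta> "Cfun \<alpha> c G D" K "Fdist D" t]
      by (simp add: st_def ps_def sq_def C_def F_def)
  qed
qed

end
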